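(* Let $U$ be a finite set and let $d$ be an $\alpha$-relaxed semi-metric distance on $U$ for some $\alpha \ge 1$. Then for any two disjoint subsets $X, Y \subseteq U$, $$\alpha\,(|X|-1)\,d(X,Y) \;\ge\; |Y|\, d(X).$$
   Context: An $\alpha$-relaxed semi-metric distance on $U$ (with $\alpha\ge 1$) is a function $d:U\times U\to\mathbb{R}_{\ge 0}$ with $d(u,v)=d(v,u)$, $d(u,u)=0$, satisfying the relaxed triangle inequality $d(u,v)\le \alpha\,(d(v,w)+d(w,u))$ for all $u,v,w\in U$. For $S\subseteq U$, $d(S)=\sum_{\{u,v\}\subseteq S,\,u\neq v} d(u,v)$ (sum over unordered pairs). For disjoint $S,T\subseteq U$, $d(S,T)=d(S\cup T)-d(S)-d(T)=\sum_{s\in S,\,t\in T} d(s,t)$. *)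

theory Defs
  imports Complex_Main
begin

definition relaxed_semimetric :: "'a set \<Rightarrow> real \<Rightarrow> ('a \<Rightarrow> 'a \<Rightarrow> real) \<Rightarrow> bool" where
  "relaxed_semimetric U \<alpha> d \<longleftrightarrow> \<alpha> \<ge> 1 \<and>
     (\<forall>u\<in>U. \<forall>v\<in>U. d u v \<ge> 0 \<and> d u v = d v u) \<and>
     (\<forall>u\<in>U. d u u = 0) \<and>
     (\<forall>u\<in>U. \<forall>v\<in>U. \<forall>w\<in>U. d u v \<le> \<alpha> * (d v w + d w u))"

definition dset :: "('a \<Rightarrow> 'a \<Rightarrow> real) \<Rightarrow> 'a set \<Rightarrow> real" where
  "dset d S = (\<Sum>p\<in>{p. \<exists>u v. p = {u, v} \<and> u \<in> S \<and> v \<in> S \<and> u \<noteq> v}. (THE q. \<exists>u v. p = {u,v} \<and> u \<noteq> v \<and> q = d u v))"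

definition dbetween :: "('a \<Rightarrow> 'a \<Rightarrow> real) \<Rightarrow> 'a set \<Rightarrow> 'a set \<Rightarrow> real" where
  "dbetween d S T = dset d (S \<union> T) - dset d S - dset d T"

end

theory Submission
  imports Defs
begin

lemma dset_double:
  assumes fin: "finite S" and sym: "\<And>u v. u \<in> S \<Longrightarrow> v \<in> S \<Longrightarrow> d u v = d v u"
  shows "2 * dset d S = (\<Sum>u\<in>S. \<Sum>v\<in>S - {u}. d u v)"
proof -
  define D where "D = Sigma S (\<lambda>u. S - {u})"
  define h where "h = (\<lambda>(u::'a,v::'a). {u,v})"
  define F where "F = (\<lambda>p. (THE q. \<exists>u v. p = {u,v} \<and> u \<noteq> v \<and> q = d u v))"
  define P where "P = {p. \<exists>u v. p = {u, v} \<and> u \<in> S \<and> v \<in> S \<and> u \<noteq> v}"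
  have finD: "finite D" unfolding D_def using fin by auto
  have hD: "h ` D = P" unfolding D_def h_def P_def by auto
  have Fab: "F {a,b} = d a b" if "a \<in> S" "b \<in> S" "a \<noteq> b" for a b
  proof -
    have "(\<exists>u v. {a,b} = {u,v} \<and> u \<noteq> v \<and> q = d u v) \<longleftrightarrow> q = d a b" for q
    proof
      assume "\<exists>u v. {a,b} = {u,v} \<and> u \<noteq> v \<and> q = d u v"
      then obtain u v where "{a,b} = {u,v}" "q = d u v" by blast
      then have "(u = a \<and> v = b) \<or> (u = b \<and> v = a)" by (metis doubleton_eq_iff)
      then show "q = d a b" using \<open>q = d u v\<close> sym that by auto
    next
      assume "q = d a b" then show "\<exists>u v. {a,b} = {u,v} \<and> u \<noteq> v \<and> q = d u v" using that by blast
    qed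
    then show ?thesis unfolding F_def by simp
  qed
  have "(\<Sum>u\<in>S. \<Sum>v\<in>S - {u}. d u v) = (\<Sum>x\<in>D. (\<lambda>(u,v). d u v) x)"
    unfolding D_def using fin by (simp add: sum.Sigma)
  also have "\<dots> = (\<Sum>p\<in>h ` D. \<Sum>x\<in>{x\<in>D. h x = p}. (\<lambda>(u,v). d u v) x)"
    by (rule sum.image_gen[OF finD])
  also have "\<dots> = (\<Sum>p\<in>P. 2 * F p)"
    unfolding hD
  proof (rule sum.cong[OF refl])
    fix p assume "p \<in> P"
    then obtain a b where p: "p = {a,b}" "a \<in> S" "b \<in> S" "a \<noteq> b" unfolding P_def by blast
    have fib: "{x\<in>D. h x = p} = {(a,b),(b,a)}"
      using p unfolding D_def h_def by (auto simp: doubleton_eq_iff split: prod.splits)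
    show "(\<Sum>x\<in>{x\<in>D. h x = p}. (\<lambda>(u,v). d u v) x) = 2 * F p"
      unfolding fib using p Fab sym by simp
  qed
  also have "\<dots> = 2 * dset d S"
    unfolding dset_def P_def F_def by (simp add: sum_distrib_left)
  finally show ?thesis by simp
qed

lemma dset_double':
  assumes fin: "finite S" and sym: "\<And>u v. u \<in> S \<Longrightarrow> v \<in> S \<Longrightarrow> d u v = d v u"
    and z: "\<And>u. u \<in> S \<Longrightarrow> d u u = 0"
  shows "2 * dset d S = (\<Sum>u\<in>S. \<Sum>v\<in>S. d u v)"
proof -
  have "(\<Sum>v\<in>S. d u v) = (\<Sum>v\<in>S - {u}. d u v)" if "u \<in> S" for u
    using fin that z by (simp add: sum.remove)
  then show ?thesis using dset_double[OF fin sym] by simp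
qed

theorem lemma1:
  fixes U :: "'a set" and d :: "'a \<Rightarrow> 'a \<Rightarrow> real" and \<alpha> :: real and X Y :: "'a set"
  assumes "finite U"
    and "relaxed_semimetric U \<alpha> d"
    and "X \<subseteq> U" and "Y \<subseteq> U" and "X \<inter> Y = {}"
  shows "\<alpha> * (real (card X) - 1) * dbetween d X Y \<ge> real (card Y) * dset d X"
proof -
  note rs = assms(2)[unfolded relaxed_semimetric_def]
  have finX: "finite X" using assms(1,3) finite_subset by blast
  have finY: "finite Y" using assms(1,4) finite_subset by blast
  have sym: "\<And>u v. u \<in> U \<Longrightarrow> v \<in> U \<Longrightarrow> d u v = d v u" using rs by auto
  have z: "\<And>u. u \<in> U \<Longrightarrow> d u u = 0" using rs by auto
  have tri: "\<And>u v w. u \<in> U \<Longrightarrow> v \<in> U \<Longrightarrow> w \<in> U \<Longrightarrow> d u v \<le> \<alpha> * (d v w + d w u)"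
    using rs by auto
  have D: "2 * dset d S = (\<Sum>u\<in>S. \<Sum>v\<in>S. d u v)" if "S \<subseteq> U" for S
    using that by (intro dset_double' finite_subset[OF that assms(1)] sym z) auto
  have B: "dbetween d X Y = (\<Sum>x\<in>X. \<Sum>y\<in>Y. d x y)"
  proof -
    have "2 * dset d (X \<union> Y) = (\<Sum>u\<in>X \<union> Y. \<Sum>v\<in>X \<union> Y. d u v)" using D assms by auto
    also have "\<dots> = (\<Sum>u\<in>X. \<Sum>v\<in>X \<union> Y. d u v) + (\<Sum>u\<in>Y. \<Sum>v\<in>X \<union> Y. d u v)"
      using finX finY assms(5) by (simp add: sum.union_disjoint)
    also have "\<dots> = (\<Sum>u\<in>X. \<Sum>v\<in>X. d u v) + (\<Sum>u\<in>X. \<Sum>v\<in>Y. d u v)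
        + ((\<Sum>u\<in>Y. \<Sum>v\<in>X. d u v) + (\<Sum>u\<in>Y. \<Sum>v\<in>Y. d u v))"
      using finX finY assms(5) by (simp add: sum.union_disjoint sum.distrib)
    also have "(\<Sum>u\<in>Y. \<Sum>v\<in>X. d u v) = (\<Sum>u\<in>X. \<Sum>v\<in>Y. d u v)"
      apply (subst sum.swap) apply (rule sum.cong[OF refl])+
      using sym assms(3,4) by auto
    finally have e: "2 * dset d (X \<union> Y) = 2 * (\<Sum>u\<in>X. \<Sum>v\<in>Y. d u v) + ((\<Sum>u\<in>X. \<Sum>v\<in>X. d u v) + (\<Sum>u\<in>Y. \<Sum>v\<in>Y. d u v))" by simp
    have "2 * dset d X = (\<Sum>u\<in>X. \<Sum>v\<in>X. d u v)" "2 * dset d Y = (\<Sum>u\<in>Y. \<Sum>v\<in>Y. d u v)"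
      using D assms(3,4) by auto
    with e show ?thesis unfolding dbetween_def by simp
  qed
  have key: "(\<Sum>u\<in>X. \<Sum>v\<in>X - {u}. d u v) \<le> \<alpha> * (2 * (real (card X) - 1) * (\<Sum>x\<in>X. d x y))"
    if y: "y \<in> Y" for y
  proof -
    have yU: "y \<in> U" using y assms by auto
    have "(\<Sum>u\<in>X. \<Sum>v\<in>X - {u}. d u v) \<le> (\<Sum>u\<in>X. \<Sum>v\<in>X - {u}. \<alpha> * (d v y + d y u))"
      apply (rule sum_mono)+ using tri yU assms(3) by auto
    also have "\<dots> = \<alpha> * ((\<Sum>u\<in>X. \<Sum>v\<in>X - {u}. d v y) + (\<Sum>u\<in>X. \<Sum>v\<in>X - {u}. d y u))"
      by (simp only: sum_distrib_left distrib_left sum.distrib)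
    also have "(\<Sum>u\<in>X. \<Sum>v\<in>X - {u}. d y u) = (\<Sum>u\<in>X. (real (card X) - 1) * d u y)"
    proof (rule sum.cong[OF refl])
      fix x assume x: "x \<in> X"
      have "card X \<ge> 1" using x finX by (metis One_nat_def Suc_leI card_gt_0_iff empty_iff)
      then have "real (card X - 1) = real (card X) - 1" by (simp add: of_nat_diff)
      moreover have "d y x = d x y" using sym yU x assms(3) by auto
      ultimately show "(\<Sum>v\<in>X - {x}. d y x) = (real (card X) - 1) * d x y"
        using x finX by (simp add: card_Diff_singleton)
    qed
    also have "(\<Sum>u\<in>X. \<Sum>v\<in>X - {u}. d v y) = (\<Sum>v\<in>X. \<Sum>u\<in>X - {v}. d v y)"
    proof -
      have "(\<Sum>u\<in>X. \<Sum>v\<in>X - {u}. d v y) = (\<Sum>u\<in>X. \<Sum>v\<in>X. if v = u then 0 else d v y)"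
        apply (rule sum.cong[OF refl]) using finX by (simp add: sum.remove if_distrib sum.If_cases Diff_eq Int_commute)
      also have "\<dots> = (\<Sum>v\<in>X. \<Sum>u\<in>X. if v = u then 0 else d v y)" by (rule sum.swap)
      also have "\<dots> = (\<Sum>v\<in>X. \<Sum>u\<in>X - {v}. d v y)"
        apply (rule sum.cong[OF refl]) using finX by (simp add: sum.If_cases Diff_eq Int_commute)
      finally show ?thesis .
    qed
    also have "\<dots> = (\<Sum>u\<in>X. (real (card X) - 1) * d u y)"
    proof (rule sum.cong[OF refl])
      fix x assume x: "x \<in> X"
      have "card X \<ge> 1" using x finX by (metis One_nat_def Suc_leI card_gt_0_iff empty_iff)
      then have "real (card X - 1) = real (card X) - 1" by (simp add: of_nat_diff)
      then show "(\<Sum>u\<in>X - {x}. d x y) = (real (card X) - 1) * d x y"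
        using x finX by (simp add: card_Diff_singleton)
    qed
    finally have f: "(\<Sum>u\<in>X. \<Sum>v\<in>X - {u}. d u v) \<le> \<alpha> * ((\<Sum>u\<in>X. (real (card X) - 1) * d u y) + (\<Sum>u\<in>X. (real (card X) - 1) * d u y))" .
    have "(\<Sum>u\<in>X. (real (card X) - 1) * d u y) = (real (card X) - 1) * (\<Sum>x\<in>X. d x y)"
      by (simp only: sum_distrib_left)
    with f have f2: "(\<Sum>u\<in>X. \<Sum>v\<in>X - {u}. d u v) \<le> \<alpha> * ((real (card X) - 1) * (\<Sum>x\<in>X. d x y) + (real (card X) - 1) * (\<Sum>x\<in>X. d x y))" by simp
    have g: "\<alpha> * ((real (card X) - 1) * (\<Sum>x\<in>X. d x y) + (real (card X) - 1) * (\<Sum>x\<in>X. d x y)) = \<alpha> * (2 * (real (card X) - 1) * (\<Sum>x\<in>X. d x y))"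
      by (simp add: algebra_simps)
    show ?thesis using f2 g by linarith
  qed
  have "2 * (real (card Y) * dset d X) = (\<Sum>y\<in>Y. \<Sum>u\<in>X. \<Sum>v\<in>X - {u}. d u v)"
    using dset_double[OF finX, of d] sym assms(3) by auto
  also have "\<dots> \<le> (\<Sum>y\<in>Y. \<alpha> * (2 * (real (card X) - 1) * (\<Sum>x\<in>X. d x y)))"
    by (rule sum_mono) (rule key)
  also have "\<dots> = \<alpha> * 2 * (real (card X) - 1) * (\<Sum>y\<in>Y. \<Sum>x\<in>X. d x y)"
    by (simp only: mult.assoc[symmetric] sum_distrib_left[symmetric])
  also have "(\<Sum>y\<in>Y. \<Sum>x\<in>X. d x y) = dbetween d X Y" unfolding B by (rule sum.swap)
  finally have h: "2 * (real (card Y) * dset d X) \<le> \<alpha> * 2 * (real (card X) - 1) * dbetween d X Y" .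
  have "\<alpha> * 2 * (real (card X) - 1) * dbetween d X Y = 2 * (\<alpha> * (real (card X) - 1) * dbetween d X Y)"
    by (simp only: mult_ac)
  with h show ?thesis by linarith
qed

end
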